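(* Let $\overset{1}{\nabla}$ be a concircularly semi-symmetric metric connection on an $n$-dimensional pseudo-Riemannian manifold $(\mathcal M,g)$ with generator $\pi$ and associated vector field $P$. Then $(\mathcal M,g,\overset{1}{\nabla})$ is an Einstein type manifold of the zeroth kind (i.e. $\overset{0}{Ric}=\frac{\overset{0}{r}}{n}g$) if and only if $\overset{g}{Ric}=\frac{1}{4n}\big(4\overset{g}{r}-(n-1)\pi(P)\big)g+\frac{n-1}{4}\pi\otimes\pi$ (so in particular the manifold is quasi-Einstein).
   Context: Let $(\mathcal M,g)$ be an $n$-dimensional pseudo-Riemannian manifold with Levi-Civita connection $\overset{g}{\nabla}$, let $P$ be a vector field and $\pi=g(\cdot,P)$ its associated 1-form. The semi-symmetric metric connection generated by $\pi$ is $\overset{1}{\nabla}_XY=\overset{g}{\nabla}_XY+\pi(Y)X-g(X,Y)P$; it satisfies $\overset{1}{\nabla}g=0$ and has torsion $\overset{1}{T}(X,Y)=\pi(Y)X-\pi(X)Y$. It is called a concircularly semi-symmetric metric connection if there is a smooth function $\omega$ on $\mathcal M$ such that $(\overset{g}{\nabla}_X\pi)(Y)-\pi(X)\pi(Y)=\omega\, g(X,Y)$ for all vector fields $X,Y$. Curvature tensors: $\overset{1}{R}(X,Y)Z=\overset{1}{\nabla}_X\overset{1}{\nabla}_YZ-\overset{1}{\nabla}_Y\overset{1}{\nabla}_XZ-\overset{1}{\nabla}_{[X,Y]}Z$, and with $\mathfrak S_{XYZ}$ the cyclic sum over $X,Y,Z$: $\overset{0}{R}(X,Y)Z=\overset{1}{R}(X,Y)Z-\tfrac12(\overset{1}{\nabla}_X\overset{1}{T})(Y,Z)+\tfrac12(\overset{1}{\nabla}_Y\overset{1}{T})(X,Z)-\tfrac14\mathfrak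 S_{XYZ}\overset{1}{T}(\overset{1}{T}(X,Y),Z)-\tfrac14\overset{1}{T}(\overset{1}{T}(X,Y),Z)$. The Ricci tensors are $\overset{\theta}{Ric}(Y,Z)=\mathrm{tr}(X\mapsto \overset{\theta}{R}(X,Y)Z)$, and $\overset{g}{Ric}$ is the Ricci tensor of $\overset{g}{\nabla}$ defined the same way; $\overset{\theta}{r}$ and $\overset{g}{r}$ are their $g$-traces. A manifold is quasi-Einstein if $\overset{g}{Ric}=ag+b\,\pi\otimes\pi$ for scalar functions $a,b$. *)

theory Defs
  imports "HOL-Analysis.Analysis"
begin

text \<open>Local coordinate rendering. Points are x :: real^'n in an open coordinate
domain U; indices range over the finite type 'n (dimension n = CARD('n)).
A tensor field is given by its components in the coordinate frame.\<close>

type_synonym 'n sfield = "real^'n \<Rightarrow> real"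

definition partial :: "'n::finite \<Rightarrow> 'n sfield \<Rightarrow> 'n sfield" where
  "partial i f x = frechet_derivative f (at x) (axis i 1)"

fun Ck :: "nat \<Rightarrow> (real^'n::finite) set \<Rightarrow> 'n sfield \<Rightarrow> bool" where
  "Ck 0 U f = continuous_on U f"
| "Ck (Suc k) U f = (f differentiable_on U \<and> (\<forall>i. Ck k U (partial i f)))"

definition smooth_fun :: "(real^'n::finite) set \<Rightarrow> 'n sfield \<Rightarrow> bool" where
  "smooth_fun U f = (\<forall>k. Ck k U f)"

definition pseudo_riem :: "(real^'n::finite) set \<Rightarrow> (real^'n \<Rightarrow> 'n \<Rightarrow> 'n \<Rightarrow> real) \<Rightarrow> bool" where
  "pseudo_riem U g = (open U \<and>
     (\<forall>i j. smooth_fun U (\<lambda>x. g x i j)) \<and>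
     (\<forall>x\<in>U. \<forall>i j. g x i j = g x j i) \<and>
     (\<forall>x\<in>U. invertible (\<chi> i j. g x i j)))"

definition ginv :: "(real^'n::finite \<Rightarrow> 'n \<Rightarrow> 'n \<Rightarrow> real) \<Rightarrow> real^'n \<Rightarrow> 'n \<Rightarrow> 'n \<Rightarrow> real" where
  "ginv g x i j = matrix_inv (\<chi> a b. g x a b) $ i $ j"

text \<open>Christoffel symbols of the Levi-Civita connection:
  nabla_{d_i} d_j = sum_k Gamma k i j d_k.\<close>
definition christoffel :: "(real^'n::finite \<Rightarrow> 'n \<Rightarrow> 'n \<Rightarrow> real) \<Rightarrow> real^'n \<Rightarrow> 'n \<Rightarrow> 'n \<Rightarrow> 'n \<Rightarrow> real" where
  "christoffel g x k i j = (1/2) * (\<Sum>l\<in>UNIV. ginv g x k l *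
      (partial i (\<lambda>y. g y j l) x + partial j (\<lambda>y. g y i l) x - partial l (\<lambda>y. g y i j) x))"

text \<open>Curvature of a connection with coefficients Gam (Gam x k i j = component k of
  nabla_{d_i} d_j), convention R(X,Y)Z = nabla_X nabla_Y Z - nabla_Y nabla_X Z - nabla_[X,Y] Z;
  R(d_i,d_j)d_k = sum_l curv Gam x l i j k d_l.\<close>
definition curv :: "(real^'n::finite \<Rightarrow> 'n \<Rightarrow> 'n \<Rightarrow> 'n \<Rightarrow> real) \<Rightarrow> real^'n \<Rightarrow> 'n \<Rightarrow> 'n \<Rightarrow> 'n \<Rightarrow> 'n \<Rightarrow> real" where
  "curv Gam x l i j k =
     partial i (\<lambda>y. Gam y l j k) x - partial j (\<lambda>y. Gam y l i k) x
     + (\<Sum>m\<in>UNIV. Gam x m j k * Gam x l i m - Gam x m i k * Gam x l j m)"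

text \<open>Ricci tensor Ric(Y,Z) = tr(X \<mapsto> R(X,Y)Z) from curvature components.\<close>
definition ricci_of :: "(real^'n::finite \<Rightarrow> 'n \<Rightarrow> 'n \<Rightarrow> 'n \<Rightarrow> 'n \<Rightarrow> real) \<Rightarrow> real^'n \<Rightarrow> 'n \<Rightarrow> 'n \<Rightarrow> real" where
  "ricci_of R x j k = (\<Sum>i\<in>UNIV. R x i i j k)"

definition scalar_of :: "(real^'n::finite \<Rightarrow> 'n \<Rightarrow> 'n \<Rightarrow> real) \<Rightarrow> (real^'n \<Rightarrow> 'n \<Rightarrow> 'n \<Rightarrow> real) \<Rightarrow> real^'n \<Rightarrow> real" where
  "scalar_of g Ric x = (\<Sum>j\<in>UNIV. \<Sum>k\<in>UNIV. ginv g x j k * Ric x j k)"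

definition pi_form :: "(real^'n::finite \<Rightarrow> 'n \<Rightarrow> 'n \<Rightarrow> real) \<Rightarrow> (real^'n \<Rightarrow> 'n \<Rightarrow> real) \<Rightarrow> real^'n \<Rightarrow> 'n \<Rightarrow> real" where
  "pi_form g P x j = (\<Sum>i\<in>UNIV. g x j i * P x i)"

text \<open>Semi-symmetric metric connection nabla1_X Y = nabla^g_X Y + pi(Y) X - g(X,Y) P.\<close>
definition ssm_conn where
  "ssm_conn g P x k i j = christoffel g x k i j + pi_form g P x j * (if i = k then 1 else 0) - g x i j * P x k"

text \<open>Torsion T(X,Y) = pi(Y)X - pi(X)Y; T(d_i,d_j) = sum_k torsion g P x k i j d_k.\<close>
definition torsion where
  "torsion g P x k i j = pi_form g P x j * (if i = k then 1 else 0) - pi_form g P x i * (if j = k then 1 else 0)"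

text \<open>(nabla1_{d_i} T)(d_j,d_l), component k.\<close>
definition cov_torsion where
  "cov_torsion g P x k i j l =
     partial i (\<lambda>y. torsion g P y k j l) x
     + (\<Sum>m\<in>UNIV. ssm_conn g P x k i m * torsion g P x m j l
                 - ssm_conn g P x m i j * torsion g P x k m l
                 - ssm_conn g P x m i l * torsion g P x k j m)"

definition TT where
  "TT g P x l i j k = (\<Sum>m\<in>UNIV. torsion g P x m i j * torsion g P x l m k)"

definition curv1 where "curv1 g P = curv (ssm_conn g P)"

definition curv0 where
  "curv0 g P x l i j k = curv1 g P x l i j k
     - (1/2) * cov_torsion g P x l i j k + (1/2) * cov_torsion g P x l j i k
     - (1/4) * (TT g P x l i j k + TT g P x l j k i + TT g P x l k i j)
     - (1/4) * TT g P x l i j k"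

definition ricci_g where "ricci_g g = ricci_of (curv (christoffel g))"
definition ricci0 where "ricci0 g P = ricci_of (curv0 g P)"

text \<open>Concircularity: (nabla^g_X pi)(Y) - pi(X)pi(Y) = omega g(X,Y), omega smooth.\<close>
definition concircular :: "(real^'n::finite) set \<Rightarrow> (real^'n \<Rightarrow> 'n \<Rightarrow> 'n \<Rightarrow> real) \<Rightarrow> (real^'n \<Rightarrow> 'n \<Rightarrow> real) \<Rightarrow> bool" where
  "concircular U g P = (\<exists>\<omega>. smooth_fun U \<omega> \<and>
     (\<forall>x\<in>U. \<forall>i j. partial i (\<lambda>y. pi_form g P y j) x
        - (\<Sum>k\<in>UNIV. christoffel g x k i j * pi_form g P x k)
        - pi_form g P x i * pi_form g P x j = \<omega> x * g x i j))"

end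

theory Submission
  imports Defs
begin

lemma partial_hd:
  "(f has_derivative f') (at x) \<Longrightarrow> partial i f x = f' (axis i 1)"
  by (simp add: partial_def frechet_derivative_at[symmetric])


lemma partial_add:
  assumes "f differentiable (at x)" "h differentiable (at x)"
  shows "partial i (\<lambda>y. f y + h y) x = partial i f x + partial i h x"
proof -
  note H = has_derivative_add[OF assms[THEN frechet_derivative_works[THEN iffD1]]]
  show ?thesis by (simp only: partial_hd[OF H]) (simp add: partial_def)
qed

lemma partial_diff:
  assumes "f differentiable (at x)" "h differentiable (at x)"
  shows "partial i (\<lambda>y. f y - h y) x = partial i f x - partial i h x"
proof -
  note H = has_derivative_diff[OF assms[THEN frechet_derivative_works[THEN iffD1]]]
  show ?thesis by (simp only: partial_hd[OF H]) (simp add: partial_def)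
qed

lemma partial_mult:
  fixes f h :: "real^'n::finite \<Rightarrow> real"
  assumes "f differentiable (at x)" "h differentiable (at x)"
  shows "partial i (\<lambda>y. f y * h y) x = partial i f x * h x + f x * partial i h x"
proof -
  note H = has_derivative_mult[OF assms[THEN frechet_derivative_works[THEN iffD1]]]
  show ?thesis by (simp only: partial_hd[OF H]) (simp add: partial_def)
qed

lemma partial_const: "partial i (\<lambda>y. c) x = 0"
  unfolding partial_def by (metis has_derivative_const frechet_derivative_at)

lemma partial_cmult:
  fixes f :: "real^'n::finite \<Rightarrow> real"
  assumes "f differentiable (at x)"
  shows "partial i (\<lambda>y. c * f y) x = c * partial i f x"
  using partial_mult[OF differentiable_const assms, of i c] by (simp add: partial_const)

lemma partial_sum:
  fixes f :: "'a \<Rightarrow> real^'n::finite \<Rightarrow> real"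
  assumes "finite S" "\<And>a. a \<in> S \<Longrightarrow> f a differentiable (at x)"
  shows "partial i (\<lambda>y. \<Sum>a\<in>S. f a y) x = (\<Sum>a\<in>S. partial i (f a) x)"
proof -
  have "((\<lambda>y. \<Sum>a\<in>S. f a y) has_derivative (\<lambda>h. \<Sum>a\<in>S. frechet_derivative (f a) (at x) h)) (at x)"
    by (rule has_derivative_sum) (use assms frechet_derivative_works in auto)
  then show ?thesis by (simp only: partial_hd) (simp add: partial_def)
qed

lemma partial_local:
  assumes "open U" "x \<in> U" "\<And>y. y \<in> U \<Longrightarrow> f y = h y"
  shows "partial i f x = partial i h x"
proof -
  have "(\<lambda>f'. (f has_derivative f') (at x)) = (\<lambda>f'. (h has_derivative f') (at x))"
    apply (rule ext, rule iffI)
    subgoal premises p by (rule has_derivative_transform_within_open[OF p assms(1,2)]) (simp add: assms)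
    subgoal premises p by (rule has_derivative_transform_within_open[OF p assms(1,2)]) (simp add: assms)
    done
  then show ?thesis by (simp add: partial_def frechet_derivative_def)
qed

lemma smooth_diff:
  assumes "smooth_fun U f" "open U" "x \<in> U"
  shows "f differentiable (at x)"
proof -
  have "Ck 1 U f" using assms(1) smooth_fun_def by blast
  then have "f differentiable_on U" by simp
  then show ?thesis using assms differentiable_on_eq_differentiable_at by blast
qed

lemma smooth_partial:
  assumes "smooth_fun U f"
  shows "smooth_fun U (partial i f)"
  using assms unfolding smooth_fun_def by (metis Ck.simps(2))

lemma differentiable_prod':
  fixes f :: "'a \<Rightarrow> real^'n::finite \<Rightarrow> real"
  assumes "finite S" "\<And>a. a \<in> S \<Longrightarrow> f a differentiable (at x)"
  shows "(\<lambda>y. \<Prod>a\<in>S. f a y) differentiable (at x)"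
  using assms
proof (induction S rule: finite_induct)
  case empty then show ?case by simp
next
  case (insert a F)
  then show ?case by (simp add: prod.insert)
qed

lemma differentiable_det:
  fixes F :: "real^'m::finite \<Rightarrow> 'n::finite \<Rightarrow> 'n \<Rightarrow> real"
  assumes "\<And>a b. (\<lambda>y. F y a b) differentiable (at x)"
  shows "(\<lambda>y. det (\<chi> a b. F y a b)) differentiable (at x)"
  unfolding det_def
  by (auto intro!: differentiable_sum differentiable_mult differentiable_prod' assms)


lemma diff_local:
  assumes "open U" "x \<in> U" "\<And>y. y \<in> U \<Longrightarrow> f y = h y" "f differentiable (at x)"
  shows "h differentiable (at x)"
  using assms(4) unfolding differentiable_def
  using has_derivative_transform_within_open[OF _ assms(1,2)] assms(3) by blast

lemma inv_props:
  fixes M :: "real^'n::finite^'n"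
  assumes "invertible M"
  shows "M ** matrix_inv M = mat 1" "matrix_inv M ** M = mat 1"
proof -
  have "\<exists>A'. M ** A' = mat 1 \<and> A' ** M = mat 1" using assms invertible_def by blast
  from someI_ex[OF this] show "M ** matrix_inv M = mat 1" "matrix_inv M ** M = mat 1"
    unfolding matrix_inv_def by auto
qed

lemma axis_nth1: "axis j (1::real) $ a = (if a = j then 1 else 0)"
  by (simp add: axis_def)

lemma inv_entry:
  fixes M :: "real^'n::finite^'n"
  assumes "invertible M"
  shows "matrix_inv M $ i $ j = det (\<chi> a b. if b = i then (if a = j then 1 else 0) else M $ a $ b) / det M"
proof -
  have d0: "det M \<noteq> 0" using assms invertible_det_nz by blast
  define v where "v = matrix_inv M *v axis j 1"
  have "M *v v = axis j 1"
    unfolding v_def by (simp add: matrix_vector_mul_assoc inv_props[OF assms])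
  then have "v = (\<chi> k. det (\<chi> a b. if b = k then (axis j 1) $ a else M $ a $ b) / det M)"
    using cramer[OF d0] by blast
  then have "v $ i = det (\<chi> a b. if b = i then (axis j 1) $ a else M $ a $ b) / det M" by simp
  moreover have "v $ i = matrix_inv M $ i $ j"
    unfolding v_def by (simp add: matrix_vector_mult_def axis_def if_distrib cong: if_cong)
  ultimately show ?thesis by (simp only: axis_nth1)
qed

lemma sd1: "(\<Sum>l\<in>(UNIV::'n::finite set). f l * (if k = l then 1 else 0)) = (f k :: real)"
proof -
  have "(\<Sum>l\<in>(UNIV::'n set). f l * (if k = l then 1 else 0)) = (\<Sum>l\<in>UNIV. if k = l then f l else 0)"
    by (rule sum.cong) auto
  then show ?thesis by simp
qed
lemma sd2: "(\<Sum>l\<in>(UNIV::'n::finite set). f l * (if l = k then 1 else 0)) = (f k :: real)"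
  using sd1[of f k] by (simp add: eq_commute[of k])
lemma sd3: "(\<Sum>l\<in>(UNIV::'n::finite set). (if k = l then 1 else 0) * f l) = (f k :: real)"
  using sd1[of f k] by (simp add: mult.commute)
lemma sd4: "(\<Sum>l\<in>(UNIV::'n::finite set). (if l = k then 1 else 0) * f l) = (f k :: real)"
  using sd2[of f k] by (simp add: mult.commute)


locale geo =
  fixes U :: "(real^'n::finite) set"
    and g :: "real^'n \<Rightarrow> 'n \<Rightarrow> 'n \<Rightarrow> real"
    and P :: "real^'n \<Rightarrow> 'n \<Rightarrow> real"
  assumes pr: "pseudo_riem U g"
    and Ps: "\<forall>i. smooth_fun U (\<lambda>x. P x i)"
begin

lemma openU: "open U" using pr pseudo_riem_def by blast
lemma gsym: "x \<in> U \<Longrightarrow> g x i j = g x j i" using pr pseudo_riem_def by blast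
lemma gsm: "smooth_fun U (\<lambda>x. g x i j)" using pr pseudo_riem_def by blast
lemma ginvt: "x \<in> U \<Longrightarrow> invertible (\<chi> i j. g x i j)" using pr pseudo_riem_def by blast

lemma inv1: "x \<in> U \<Longrightarrow> (\<Sum>l\<in>UNIV. ginv g x k l * g x l j) = (if k = j then 1 else 0)"
proof -
  assume "x \<in> U"
  from inv_props(2)[OF ginvt[OF this]]
  have "(matrix_inv (\<chi> i j. g x i j) ** (\<chi> i j. g x i j)) $ k $ j = mat 1 $ k $ j" by simp
  then show ?thesis by (simp add: matrix_matrix_mult_def mat_def ginv_def)
qed

lemma inv2: "x \<in> U \<Longrightarrow> (\<Sum>l\<in>UNIV. g x k l * ginv g x l j) = (if k = j then 1 else 0)"
proof -
  assume "x \<in> U"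
  from inv_props(1)[OF ginvt[OF this]]
  have "((\<chi> i j. g x i j) ** matrix_inv (\<chi> i j. g x i j)) $ k $ j = mat 1 $ k $ j" by simp
  then show ?thesis by (simp add: matrix_matrix_mult_def mat_def ginv_def)
qed

lemma g_diff: "x \<in> U \<Longrightarrow> (\<lambda>y. g y i j) differentiable (at x)"
  using smooth_diff[OF gsm openU] .
lemma dg_diff: "x \<in> U \<Longrightarrow> partial k (\<lambda>y. g y i j) differentiable (at x)"
  using smooth_diff[OF smooth_partial[OF gsm] openU] .
lemma P_diff: "x \<in> U \<Longrightarrow> (\<lambda>y. P y i) differentiable (at x)"
  using smooth_diff[OF Ps[rule_format] openU] .

lemma ginv_diff: "x \<in> U \<Longrightarrow> (\<lambda>y. ginv g y i j) differentiable (at x)"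
proof -
  assume x: "x \<in> U"
  have ent: "\<And>a b. (\<lambda>y. if b = i then (if a = j then 1 else 0) else g y a b) differentiable (at x)"
    subgoal for a b by (cases "b = i") (auto simp: g_diff[OF x])
    done
  let ?f = "\<lambda>y. det (\<chi> a b. if b = i then (if a = j then 1 else 0) else g y a b) / det (\<chi> a b. g y a b)"
  have fd: "?f differentiable (at x)"
  proof (rule differentiable_divide)
    show "(\<lambda>y. det (\<chi> a b. if b = i then (if a = j then 1 else 0) else g y a b)) differentiable (at x)"
      by (rule differentiable_det) (rule ent)
    show "(\<lambda>y. det (\<chi> a b. g y a b)) differentiable (at x)"
      by (rule differentiable_det) (auto intro: g_diff[OF x])
    show "det (\<chi> a b. g x a b) \<noteq> 0" using ginvt[OF x] invertible_det_nz by blast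
  qed
  have fe: "\<And>y. y \<in> U \<Longrightarrow> ?f y = ginv g y i j"
  proof -
    fix y assume y: "y \<in> U"
    have e: "\<And>a b. (\<chi> i j. g y i j) $ a $ b = g y a b" by simp
    show "?f y = ginv g y i j"
      by (simp only: ginv_def inv_entry[OF ginvt[OF y]] e)
  qed
  show ?thesis by (rule diff_local[OF openU x fe fd])
qed

lemma pi_diff: "x \<in> U \<Longrightarrow> (\<lambda>y. pi_form g P y j) differentiable (at x)"
  unfolding pi_form_def by (auto intro!: differentiable_sum differentiable_mult g_diff P_diff)

lemma chr_diff: "x \<in> U \<Longrightarrow> (\<lambda>y. christoffel g y k i j) differentiable (at x)"
  unfolding christoffel_def
  apply (rule differentiable_mult[OF differentiable_const])
  apply (rule differentiable_sum, simp)
  apply (intro ballI differentiable_mult differentiable_diff differentiable_add ginv_diff dg_diff)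
  apply assumption+
  done

lemma dgsym: "x \<in> U \<Longrightarrow> partial i (\<lambda>y. g y j k) x = partial i (\<lambda>y. g y k j) x"
  by (rule partial_local[OF openU]) (auto simp: gsym)

lemma chr_sym: "x \<in> U \<Longrightarrow> christoffel g x k i j = christoffel g x k j i"
  unfolding christoffel_def
proof -
  assume x: "x \<in> U"
  have "\<And>l. partial i (\<lambda>y. g y j l) x + partial j (\<lambda>y. g y i l) x - partial l (\<lambda>y. g y i j) x
     = partial j (\<lambda>y. g y i l) x + partial i (\<lambda>y. g y j l) x - partial l (\<lambda>y. g y j i) x"
    using dgsym[OF x] by simp
  then show "1 / 2 * (\<Sum>l\<in>UNIV. ginv g x k l * (partial i (\<lambda>y. g y j l) x + partial j (\<lambda>y. g y i l) x - partial l (\<lambda>y. g y i j) x)) =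
    1 / 2 * (\<Sum>l\<in>UNIV. ginv g x k l * (partial j (\<lambda>y. g y i l) x + partial i (\<lambda>y. g y j l) x - partial l (\<lambda>y. g y j i) x))"
    by (simp only:)
qed

lemma chr_lower: "x \<in> U \<Longrightarrow> (\<Sum>a\<in>UNIV. christoffel g x a i j * g x a k) =
   (1/2) * (partial i (\<lambda>y. g y j k) x + partial j (\<lambda>y. g y i k) x - partial k (\<lambda>y. g y i j) x)"
proof -
  assume x: "x \<in> U"
  let ?B = "\<lambda>l. partial i (\<lambda>y. g y j l) x + partial j (\<lambda>y. g y i l) x - partial l (\<lambda>y. g y i j) x"
  have "(\<Sum>a\<in>UNIV. christoffel g x a i j * g x a k) = (\<Sum>a\<in>UNIV. \<Sum>l\<in>UNIV. (1/2) * (ginv g x a l * ?B l * g x a k))"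
    by (simp only: christoffel_def sum_distrib_left sum_distrib_right mult.assoc)
  also have "\<dots> = (\<Sum>l\<in>UNIV. \<Sum>a\<in>UNIV. (1/2) * (ginv g x a l * ?B l * g x a k))"
    by (rule sum.swap)
  also have "\<dots> = (\<Sum>l\<in>UNIV. (1/2) * ?B l * (\<Sum>a\<in>UNIV. g x k a * ginv g x a l))"
  proof (rule sum.cong[OF refl])
    fix l
    have "(\<Sum>a\<in>UNIV. (1/2) * (ginv g x a l * ?B l * g x a k)) = (\<Sum>a\<in>UNIV. ((1/2) * ?B l) * (g x k a * ginv g x a l))"
      proof (rule sum.cong[OF refl])
      fix a
      show "(1/2) * (ginv g x a l * ?B l * g x a k) = ((1/2) * ?B l) * (g x k a * ginv g x a l)"
        by (subst gsym[OF x, of a k]) (simp only: mult_ac)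
    qed
    then show "(\<Sum>a\<in>UNIV. (1/2) * (ginv g x a l * ?B l * g x a k)) = (1/2) * ?B l * (\<Sum>a\<in>UNIV. g x k a * ginv g x a l)"
      by (simp only: sum_distrib_left)
  qed
  also have "\<dots> = (1/2) * ?B k"
    by (simp only: inv2[OF x] sd1)
  finally show ?thesis .
qed

lemma metric_compat: "x \<in> U \<Longrightarrow> partial i (\<lambda>y. g y j k) x =
   (\<Sum>a\<in>UNIV. christoffel g x a i j * g x a k) + (\<Sum>a\<in>UNIV. christoffel g x a i k * g x j a)"
proof -
  assume x: "x \<in> U"
  have "(\<Sum>a\<in>UNIV. christoffel g x a i k * g x j a) = (\<Sum>a\<in>UNIV. christoffel g x a i k * g x a j)"
    by (rule sum.cong[OF refl]) (simp only: gsym[OF x, of j])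
  then have "(\<Sum>a\<in>UNIV. christoffel g x a i j * g x a k) + (\<Sum>a\<in>UNIV. christoffel g x a i k * g x j a)
     = (1/2) * (partial i (\<lambda>y. g y j k) x + partial j (\<lambda>y. g y i k) x - partial k (\<lambda>y. g y i j) x)
      + (1/2) * (partial i (\<lambda>y. g y k j) x + partial k (\<lambda>y. g y i j) x - partial j (\<lambda>y. g y i k) x)"
    by (simp only: chr_lower[OF x])
  also have "\<dots> = partial i (\<lambda>y. g y j k) x"
    by (simp add: dgsym[OF x, of i k j] algebra_simps)
  finally show ?thesis by simp
qed

lemma dpi_prod: "x \<in> U \<Longrightarrow> partial i (\<lambda>y. pi_form g P y j) x =
   (\<Sum>m\<in>UNIV. partial i (\<lambda>y. g y j m) x * P x m + g x j m * partial i (\<lambda>y. P y m) x)"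
proof -
  assume x: "x \<in> U"
  have "partial i (\<lambda>y. \<Sum>m\<in>UNIV. g y j m * P y m) x = (\<Sum>m\<in>UNIV. partial i (\<lambda>y. g y j m * P y m) x)"
    by (rule partial_sum) (simp_all add: differentiable_mult g_diff[OF x] P_diff[OF x])
  also have "\<dots> = (\<Sum>m\<in>UNIV. partial i (\<lambda>y. g y j m) x * P x m + g x j m * partial i (\<lambda>y. P y m) x)"
    by (rule sum.cong[OF refl]) (rule partial_mult[OF g_diff[OF x] P_diff[OF x]])
  finally show ?thesis unfolding pi_form_def .
qed

end


lemma contr: "(\<Sum>j\<in>(UNIV::'n::finite set). a j * (\<Sum>m\<in>(UNIV::'m::finite set). b j m * f m)) =
   (\<Sum>m\<in>UNIV. (\<Sum>j\<in>UNIV. a j * b j m) * (f m :: real))"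
proof -
  have "(\<Sum>j\<in>(UNIV::'n set). a j * (\<Sum>m\<in>(UNIV::'m set). b j m * f m)) = (\<Sum>j\<in>UNIV. \<Sum>m\<in>UNIV. a j * b j m * f m)"
    by (simp add: sum_distrib_left mult.assoc)
  also have "\<dots> = (\<Sum>m\<in>UNIV. \<Sum>j\<in>UNIV. a j * b j m * f m)" by (rule sum.swap)
  also have "\<dots> = (\<Sum>m\<in>UNIV. (\<Sum>j\<in>UNIV. a j * b j m) * f m)" by (simp add: sum_distrib_right)
  finally show ?thesis .
qed

context geo
begin

lemma GP: "x \<in> U \<Longrightarrow> (\<Sum>j\<in>UNIV. ginv g x l j * pi_form g P x j) = P x l"
  unfolding pi_form_def by (simp only: contr inv1 sd3)

lemma Gg: "x \<in> U \<Longrightarrow> (\<Sum>j\<in>UNIV. ginv g x l j * g x i j) = (if l = i then 1 else 0)"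
  using inv1[of x l i] gsym[of x i] by simp

lemma trace_gg: "x \<in> U \<Longrightarrow> (\<Sum>j\<in>UNIV. \<Sum>k\<in>UNIV. ginv g x j k * g x j k) = real CARD('n)"
proof -
  assume x: "x \<in> U"
  have "(\<Sum>j\<in>UNIV. \<Sum>k\<in>UNIV. ginv g x j k * g x j k) = (\<Sum>j\<in>(UNIV::'n set). 1)"
    by (rule sum.cong[OF refl]) (simp add: Gg[OF x])
  then show ?thesis by simp
qed

lemma trace_pp: "x \<in> U \<Longrightarrow> (\<Sum>j\<in>UNIV. \<Sum>k\<in>UNIV. ginv g x j k * (pi_form g P x j * pi_form g P x k))
   = (\<Sum>i\<in>UNIV. pi_form g P x i * P x i)"
proof -
  assume x: "x \<in> U"
  have "\<And>j. (\<Sum>k\<in>UNIV. ginv g x j k * (pi_form g P x j * pi_form g P x k)) = pi_form g P x j * P x j"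
  proof -
    fix j
    have "(\<Sum>k\<in>UNIV. ginv g x j k * (pi_form g P x j * pi_form g P x k)) = pi_form g P x j * (\<Sum>k\<in>UNIV. ginv g x j k * pi_form g P x k)"
      by (simp add: sum_distrib_left ac_simps)
    then show "?thesis j" by (simp only: GP[OF x])
  qed
  then show ?thesis by simp
qed

end

locale geoc = geo +
  fixes \<omega> :: "real^'n \<Rightarrow> real"
  assumes conc: "\<forall>x\<in>U. \<forall>i j. partial i (\<lambda>y. pi_form g P y j) x
        - (\<Sum>k\<in>UNIV. christoffel g x k i j * pi_form g P x k)
        - pi_form g P x i * pi_form g P x j = \<omega> x * g x i j"
begin

lemma dpi: "x \<in> U \<Longrightarrow> partial i (\<lambda>y. pi_form g P y j) x =
  (\<Sum>k\<in>UNIV. christoffel g x k i j * pi_form g P x k) + pi_form g P x i * pi_form g P x j + \<omega> x * g x i j"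
proof -
  assume x: "x \<in> U"
  have "partial i (\<lambda>y. pi_form g P y j) x
        - (\<Sum>k\<in>UNIV. christoffel g x k i j * pi_form g P x k)
        - pi_form g P x i * pi_form g P x j = \<omega> x * g x i j" using conc x by blast
  then show ?thesis by linarith
qed

lemma W: "x \<in> U \<Longrightarrow> (\<Sum>m\<in>UNIV. g x j m * partial i (\<lambda>y. P y m) x) =
   pi_form g P x i * pi_form g P x j + \<omega> x * g x i j
   - (\<Sum>m\<in>UNIV. \<Sum>a\<in>UNIV. christoffel g x a i m * g x j a * P x m)"
proof -
  assume x: "x \<in> U"
  have e1: "partial i (\<lambda>y. pi_form g P y j) x = (\<Sum>m\<in>UNIV. partial i (\<lambda>y. g y j m) x * P x m)
     + (\<Sum>m\<in>UNIV. g x j m * partial i (\<lambda>y. P y m) x)"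
    by (simp only: dpi_prod[OF x] sum.distrib)
  have "(\<Sum>m\<in>UNIV. partial i (\<lambda>y. g y j m) x * P x m) =
     (\<Sum>m\<in>UNIV. (\<Sum>a\<in>UNIV. christoffel g x a i j * g x a m) * P x m)
     + (\<Sum>m\<in>UNIV. (\<Sum>a\<in>UNIV. christoffel g x a i m * g x j a) * P x m)"
    by (simp only: metric_compat[OF x] sum.distrib distrib_right)
  also have "(\<Sum>m\<in>UNIV. (\<Sum>a\<in>UNIV. christoffel g x a i j * g x a m) * P x m)
     = (\<Sum>a\<in>UNIV. christoffel g x a i j * pi_form g P x a)"
    unfolding pi_form_def by (simp only: contr)
  also have "(\<Sum>m\<in>UNIV. (\<Sum>a\<in>UNIV. christoffel g x a i m * g x j a) * P x m)
     = (\<Sum>m\<in>UNIV. \<Sum>a\<in>UNIV. christoffel g x a i m * g x j a * P x m)"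
    by (simp only: sum_distrib_right)
  finally show ?thesis using e1 dpi[OF x, of i j] by linarith
qed

lemma dP: "x \<in> U \<Longrightarrow> partial i (\<lambda>y. P y l) x =
   pi_form g P x i * P x l + \<omega> x * (if i = l then 1 else 0) - (\<Sum>m\<in>UNIV. christoffel g x l i m * P x m)"
proof -
  assume x: "x \<in> U"
  have "partial i (\<lambda>y. P y l) x = (\<Sum>j\<in>UNIV. ginv g x l j * (\<Sum>m\<in>UNIV. g x j m * partial i (\<lambda>y. P y m) x))"
    by (simp only: contr inv1[OF x] sd3)
  also have "\<dots> = (\<Sum>j\<in>UNIV. ginv g x l j * (pi_form g P x i * pi_form g P x j + \<omega> x * g x i j
   - (\<Sum>a\<in>UNIV. g x j a * (\<Sum>m\<in>UNIV. christoffel g x a i m * P x m))))"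
  proof -
    have "\<And>j. (\<Sum>m\<in>UNIV. \<Sum>a\<in>UNIV. christoffel g x a i m * g x j a * P x m) = (\<Sum>a\<in>UNIV. g x j a * (\<Sum>m\<in>UNIV. christoffel g x a i m * P x m))"
    proof -
      fix j
      have "(\<Sum>m\<in>UNIV. \<Sum>a\<in>UNIV. christoffel g x a i m * g x j a * P x m) = (\<Sum>a\<in>UNIV. \<Sum>m\<in>UNIV. christoffel g x a i m * g x j a * P x m)"
        by (rule sum.swap)
      also have "\<dots> = (\<Sum>a\<in>UNIV. g x j a * (\<Sum>m\<in>UNIV. christoffel g x a i m * P x m))"
        by (simp add: sum_distrib_left ac_simps)
      finally show "?thesis j" .
    qed
    then show ?thesis by (simp only: W[OF x])
  qed
  also have "\<dots> = pi_form g P x i * (\<Sum>j\<in>UNIV. ginv g x l j * pi_form g P x j)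
     + \<omega> x * (\<Sum>j\<in>UNIV. ginv g x l j * g x i j)
     - (\<Sum>j\<in>UNIV. ginv g x l j * (\<Sum>a\<in>UNIV. g x j a * (\<Sum>m\<in>UNIV. christoffel g x a i m * P x m)))"
    by (simp add: sum_distrib_left sum.distrib sum_subtractf algebra_simps)
  also have "\<dots> = pi_form g P x i * P x l + \<omega> x * (if l = i then 1 else 0) - (\<Sum>m\<in>UNIV. christoffel g x l i m * P x m)"
    by (simp only: GP[OF x] Gg[OF x] contr inv1[OF x] sd3)
  finally show ?thesis by (simp add: eq_commute[of l i])
qed

end


lemma ifd1: "(a::real) * (if P then 1 else 0) = (if P then a else 0)" by simp
lemma ifd2: "(if P then 1 else 0) * (a::real) = (if P then a else 0)" by simp
lemma ifd3: "(if P then a else 0) * (b::real) = (if P then a * b else 0)" by simp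
lemma ifd4: "(a::real) * (if P then b else 0) = (if P then a * b else 0)" by simp
lemma sum_if_const: "(\<Sum>m\<in>S. if P then f m else (0::real)) = (if P then (\<Sum>m\<in>S. f m) else 0)" by simp
lemmas ifds = ifd1 ifd2 ifd3 ifd4 sum_if_const

lemma partial_minus:
  fixes f :: "real^'n::finite \<Rightarrow> real"
  assumes "f differentiable (at x)"
  shows "partial i (\<lambda>y. - f y) x = - partial i f x"
  using partial_cmult[OF assms, of i "-1"] by simp

context geoc
begin

lemma sP: "(\<Sum>m\<in>UNIV. P x m * (c * pi_form g P x m)) = c * (\<Sum>m\<in>UNIV. pi_form g P x m * P x m)"
  "(\<Sum>m\<in>UNIV. P x m * (pi_form g P x m * c)) = c * (\<Sum>m\<in>UNIV. pi_form g P x m * P x m)"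
  "(\<Sum>m\<in>UNIV. c * (P x m * pi_form g P x m)) = c * (\<Sum>m\<in>UNIV. pi_form g P x m * P x m)"
  "(\<Sum>m\<in>UNIV. c * (pi_form g P x m * P x m)) = c * (\<Sum>m\<in>UNIV. pi_form g P x m * P x m)"
  "(\<Sum>m\<in>UNIV. pi_form g P x m * (c * P x m)) = c * (\<Sum>m\<in>UNIV. pi_form g P x m * P x m)"
  "(\<Sum>m\<in>UNIV. pi_form g P x m * (P x m * c)) = c * (\<Sum>m\<in>UNIV. pi_form g P x m * P x m)"
  by (simp_all add: sum_distrib_left ac_simps)

lemma dT: "x \<in> U \<Longrightarrow> partial i (\<lambda>y. torsion g P y k j l) x =
   partial i (\<lambda>y. pi_form g P y l) x * (if j = k then 1 else 0)
 - partial i (\<lambda>y. pi_form g P y j) x * (if l = k then 1 else 0)"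
  unfolding torsion_def
  by (cases "j = k"; cases "l = k") (simp_all add: partial_diff pi_diff partial_const partial_minus)

lemma CTf: "x \<in> U \<Longrightarrow> cov_torsion g P x k i j l =
   (\<omega> x + (\<Sum>m\<in>UNIV. pi_form g P x m * P x m)) *
   (g x i l * (if j = k then 1 else 0) - g x i j * (if l = k then 1 else 0))"
proof -
  assume x: "x \<in> U"
  show ?thesis
    unfolding cov_torsion_def dT[OF x]
    unfolding dpi[OF x] ssm_conn_def torsion_def
    by (simp add: algebra_simps sum_subtractf sum.distrib ifds sP)
qed

end


definition Sx where
  "Sx g P x k i j = pi_form g P x j * (if i = k then 1 else 0) - g x i j * P x k"

context geoc
begin

lemma ssm_split: "ssm_conn g P x k i j = christoffel g x k i j + Sx g P x k i j"
  unfolding ssm_conn_def Sx_def by simp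

lemma dC: "x \<in> U \<Longrightarrow> partial i (\<lambda>y. ssm_conn g P y l j k) x =
   partial i (\<lambda>y. christoffel g y l j k) x + partial i (\<lambda>y. pi_form g P y k) x * (if j = l then 1 else 0)
   - (partial i (\<lambda>y. g y j k) x * P x l + g x j k * partial i (\<lambda>y. P y l) x)"
proof -
  assume x: "x \<in> U"
  have d1: "(\<lambda>y. christoffel g y l j k + pi_form g P y k * (if j = l then 1 else 0)) differentiable (at x)"
    by (intro differentiable_add differentiable_mult chr_diff[OF x] pi_diff[OF x] differentiable_const)
  have d2: "(\<lambda>y. g y j k * P y l) differentiable (at x)"
    by (intro differentiable_mult g_diff[OF x] P_diff[OF x])
  have "partial i (\<lambda>y. ssm_conn g P y l j k) x =
     partial i (\<lambda>y. christoffel g y l j k + pi_form g P y k * (if j = l then 1 else 0)) x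
     - partial i (\<lambda>y. g y j k * P y l) x"
    unfolding ssm_conn_def by (rule partial_diff[OF d1 d2])
  also have "partial i (\<lambda>y. christoffel g y l j k + pi_form g P y k * (if j = l then 1 else 0)) x
     = partial i (\<lambda>y. christoffel g y l j k) x + partial i (\<lambda>y. pi_form g P y k * (if j = l then 1 else 0)) x"
    by (rule partial_add[OF chr_diff[OF x]]) (intro differentiable_mult pi_diff[OF x] differentiable_const)
  also have "partial i (\<lambda>y. pi_form g P y k * (if j = l then 1 else 0)) x
     = partial i (\<lambda>y. pi_form g P y k) x * (if j = l then 1 else 0)"
    using partial_mult[OF pi_diff[OF x] differentiable_const, of i k "if j = l then 1 else 0"]
    by (simp add: partial_const)
  also have "partial i (\<lambda>y. g y j k * P y l) x = partial i (\<lambda>y. g y j k) x * P x l + g x j k * partial i (\<lambda>y. P y l) x"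
    by (rule partial_mult[OF g_diff[OF x] P_diff[OF x]])
  finally show ?thesis .
qed

lemma ric_split: "x \<in> U \<Longrightarrow> ricci_of (curv1 g P) x j k - ricci_g g x j k =
  (\<Sum>i\<in>UNIV. partial i (\<lambda>y. pi_form g P y k) x * (if j = i then 1 else 0)
      - (partial i (\<lambda>y. g y j k) x * P x i + g x j k * partial i (\<lambda>y. P y i) x))
  - (\<Sum>i\<in>UNIV. partial j (\<lambda>y. pi_form g P y k) x
      - (partial j (\<lambda>y. g y i k) x * P x i + g x i k * partial j (\<lambda>y. P y i) x))
  + (\<Sum>i\<in>UNIV. \<Sum>m\<in>UNIV. christoffel g x m j k * Sx g P x i i m + Sx g P x m j k * christoffel g x i i m
      + Sx g P x m j k * Sx g P x i i m)
  - (\<Sum>i\<in>UNIV. \<Sum>m\<in>UNIV. christoffel g x m i k * Sx g P x i j m + Sx g P x m i k * christoffel g x i j m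
      + Sx g P x m i k * Sx g P x i j m)"
proof -
  assume x: "x \<in> U"
  show ?thesis
    unfolding ricci_of_def curv1_def ricci_g_def curv_def
    unfolding dC[OF x]
    unfolding ssm_split
    by (simp add: algebra_simps sum.distrib sum_subtractf ifds)
qed

lemma sum_dg: "x \<in> U \<Longrightarrow> (\<Sum>i\<in>UNIV. partial i (\<lambda>y. g y j k) x * P x i) =
   (\<Sum>i\<in>UNIV. \<Sum>a\<in>UNIV. christoffel g x a i j * g x a k * P x i)
 + (\<Sum>i\<in>UNIV. \<Sum>a\<in>UNIV. christoffel g x a i k * g x j a * P x i)"
  by (simp only: metric_compat distrib_right sum.distrib sum_distrib_right)

lemma sum_dP: "x \<in> U \<Longrightarrow> (\<Sum>i\<in>UNIV. partial i (\<lambda>y. P y i) x) =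
   (\<Sum>m\<in>UNIV. pi_form g P x m * P x m) + real CARD('n) * \<omega> x
   - (\<Sum>i\<in>UNIV. \<Sum>m\<in>UNIV. christoffel g x i i m * P x m)"
  by (simp add: dP sum_subtractf sum.distrib)

lemma E1: "x \<in> U \<Longrightarrow> (\<Sum>i\<in>UNIV. partial i (\<lambda>y. pi_form g P y k) x * (if j = i then 1 else 0)
      - (partial i (\<lambda>y. g y j k) x * P x i + g x j k * partial i (\<lambda>y. P y i) x)) =
   (\<Sum>a\<in>UNIV. christoffel g x a j k * pi_form g P x a) + pi_form g P x j * pi_form g P x k + \<omega> x * g x j k
   - (\<Sum>i\<in>UNIV. \<Sum>a\<in>UNIV. christoffel g x a i j * g x a k * P x i)
   - (\<Sum>i\<in>UNIV. \<Sum>a\<in>UNIV. christoffel g x a i k * g x j a * P x i)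
   - g x j k * ((\<Sum>m\<in>UNIV. pi_form g P x m * P x m) + real CARD('n) * \<omega> x
   - (\<Sum>i\<in>UNIV. \<Sum>m\<in>UNIV. christoffel g x i i m * P x m))"
proof -
  assume x: "x \<in> U"
  have "(\<Sum>i\<in>UNIV. partial i (\<lambda>y. pi_form g P y k) x * (if j = i then 1 else 0)
      - (partial i (\<lambda>y. g y j k) x * P x i + g x j k * partial i (\<lambda>y. P y i) x)) =
     partial j (\<lambda>y. pi_form g P y k) x - (\<Sum>i\<in>UNIV. partial i (\<lambda>y. g y j k) x * P x i)
     - g x j k * (\<Sum>i\<in>UNIV. partial i (\<lambda>y. P y i) x)"
    by (simp add: sum_subtractf sum.distrib sum_distrib_left sd1)
  then show ?thesis by (simp only: sum_dg[OF x] sum_dP[OF x] dpi[OF x])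
qed

lemma E2: "x \<in> U \<Longrightarrow> (\<Sum>i\<in>UNIV. partial j (\<lambda>y. pi_form g P y k) x
      - (partial j (\<lambda>y. g y i k) x * P x i + g x i k * partial j (\<lambda>y. P y i) x)) =
   (real CARD('n) - 1) * ((\<Sum>a\<in>UNIV. christoffel g x a j k * pi_form g P x a) + pi_form g P x j * pi_form g P x k + \<omega> x * g x j k)"
proof -
  assume x: "x \<in> U"
  have "(\<Sum>i\<in>UNIV. partial j (\<lambda>y. g y i k) x * P x i + g x i k * partial j (\<lambda>y. P y i) x)
     = partial j (\<lambda>y. pi_form g P y k) x"
    unfolding dpi_prod[OF x] by (rule sum.cong[OF refl]) (simp add: dgsym[OF x, of j _ k] gsym[OF x, of _ k])
  then have "(\<Sum>i\<in>UNIV. partial j (\<lambda>y. pi_form g P y k) x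
      - (partial j (\<lambda>y. g y i k) x * P x i + g x i k * partial j (\<lambda>y. P y i) x)) =
     real CARD('n) * partial j (\<lambda>y. pi_form g P y k) x - partial j (\<lambda>y. pi_form g P y k) x"
    by (simp add: sum_subtractf)
  then show ?thesis by (simp add: dpi[OF x] algebra_simps)
qed

end


context geoc
begin

lemma trS: "x \<in> U \<Longrightarrow> (\<Sum>i\<in>UNIV. Sx g P x i i m) = (real CARD('n) - 1) * pi_form g P x m"
proof -
  assume x: "x \<in> U"
  have "(\<Sum>i\<in>UNIV. g x i m * P x i) = pi_form g P x m"
    unfolding pi_form_def by (simp add: gsym[OF x, of _ m])
  then show ?thesis unfolding Sx_def by (simp add: sum_subtractf algebra_simps)
qed

lemma Q1: "x \<in> U \<Longrightarrow> (\<Sum>i\<in>UNIV. \<Sum>m\<in>UNIV. christoffel g x m j k * Sx g P x i i m) =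
   (real CARD('n) - 1) * (\<Sum>a\<in>UNIV. christoffel g x a j k * pi_form g P x a)"
proof -
  assume x: "x \<in> U"
  have "(\<Sum>i\<in>UNIV. \<Sum>m\<in>UNIV. christoffel g x m j k * Sx g P x i i m) =
     (\<Sum>m\<in>UNIV. \<Sum>i\<in>UNIV. christoffel g x m j k * Sx g P x i i m)" by (rule sum.swap)
  also have "\<dots> = (\<Sum>m\<in>UNIV. christoffel g x m j k * (\<Sum>i\<in>UNIV. Sx g P x i i m))"
    by (simp only: sum_distrib_left)
  finally show ?thesis by (simp add: trS[OF x] sum_distrib_left ac_simps)
qed

lemma Q2: "x \<in> U \<Longrightarrow> (\<Sum>i\<in>UNIV. \<Sum>m\<in>UNIV. Sx g P x m j k * christoffel g x i i m) =
   pi_form g P x k * (\<Sum>i\<in>UNIV. christoffel g x i i j)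
   - g x j k * (\<Sum>i\<in>UNIV. \<Sum>m\<in>UNIV. christoffel g x i i m * P x m)"
  unfolding Sx_def
  by (simp add: algebra_simps sum_subtractf sum.distrib ifds sum_distrib_left)

lemma Q3: "x \<in> U \<Longrightarrow> (\<Sum>i\<in>UNIV. \<Sum>m\<in>UNIV. Sx g P x m j k * Sx g P x i i m) =
   (real CARD('n) - 1) * (pi_form g P x j * pi_form g P x k - g x j k * (\<Sum>m\<in>UNIV. pi_form g P x m * P x m))"
proof -
  assume x: "x \<in> U"
  have "(\<Sum>i\<in>UNIV. \<Sum>m\<in>UNIV. Sx g P x m j k * Sx g P x i i m) =
     (\<Sum>m\<in>UNIV. \<Sum>i\<in>UNIV. Sx g P x m j k * Sx g P x i i m)" by (rule sum.swap)
  also have "\<dots> = (\<Sum>m\<in>UNIV. Sx g P x m j k * (\<Sum>i\<in>UNIV. Sx g P x i i m))"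
    by (simp only: sum_distrib_left)
  also have "\<dots> = (\<Sum>m\<in>UNIV. Sx g P x m j k * ((real CARD('n) - 1) * pi_form g P x m))"
    by (simp only: trS[OF x])
  also have "\<dots> = (real CARD('n) - 1) * (pi_form g P x j * pi_form g P x k - g x j k * (\<Sum>m\<in>UNIV. pi_form g P x m * P x m))"
    unfolding Sx_def by (simp add: algebra_simps sum_subtractf sum.distrib ifds sum_distrib_left)
  finally show ?thesis .
qed

lemma Q4: "x \<in> U \<Longrightarrow> (\<Sum>i\<in>UNIV. \<Sum>m\<in>UNIV. christoffel g x m i k * Sx g P x i j m) =
   (\<Sum>a\<in>UNIV. christoffel g x a j k * pi_form g P x a)
   - (\<Sum>i\<in>UNIV. \<Sum>a\<in>UNIV. christoffel g x a i k * g x j a * P x i)"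
  unfolding Sx_def
  by (simp add: algebra_simps sum_subtractf sum.distrib ifds sum_distrib_left)

lemma Q5: "x \<in> U \<Longrightarrow> (\<Sum>i\<in>UNIV. \<Sum>m\<in>UNIV. Sx g P x m i k * christoffel g x i j m) =
   pi_form g P x k * (\<Sum>i\<in>UNIV. christoffel g x i i j)
   - (\<Sum>i\<in>UNIV. \<Sum>a\<in>UNIV. christoffel g x a i j * g x a k * P x i)"
proof -
  assume x: "x \<in> U"
  have a: "(\<Sum>i\<in>UNIV. \<Sum>m\<in>UNIV. Sx g P x m i k * christoffel g x i j m) =
     pi_form g P x k * (\<Sum>i\<in>UNIV. christoffel g x i j i)
     - (\<Sum>i\<in>UNIV. \<Sum>m\<in>UNIV. g x i k * P x m * christoffel g x i j m)"
    unfolding Sx_def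
    by (simp add: algebra_simps sum_subtractf sum.distrib ifds sum_distrib_left)
  have b: "(\<Sum>i\<in>UNIV. christoffel g x i j i) = (\<Sum>i\<in>UNIV. christoffel g x i i j)"
    by (simp add: chr_sym[OF x, of _ j])
  have "(\<Sum>i\<in>UNIV. \<Sum>m\<in>UNIV. g x i k * P x m * christoffel g x i j m)
     = (\<Sum>m\<in>UNIV. \<Sum>i\<in>UNIV. g x i k * P x m * christoffel g x i j m)" by (rule sum.swap)
  also have "\<dots> = (\<Sum>i\<in>UNIV. \<Sum>a\<in>UNIV. christoffel g x a i j * g x a k * P x i)"
    by (simp add: chr_sym[OF x, of _ j] ac_simps)
  finally show ?thesis using a b by simp
qed

lemma Q6: "x \<in> U \<Longrightarrow> (\<Sum>i\<in>UNIV. \<Sum>m\<in>UNIV. Sx g P x m i k * Sx g P x i j m) =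
   pi_form g P x j * pi_form g P x k - g x j k * (\<Sum>m\<in>UNIV. pi_form g P x m * P x m)"
proof -
  assume x: "x \<in> U"
  have pk: "(\<Sum>i\<in>UNIV. g x i k * P x i) = pi_form g P x k"
    unfolding pi_form_def by (simp add: gsym[OF x, of _ k])
  have "(\<Sum>i\<in>UNIV. \<Sum>m\<in>UNIV. Sx g P x m i k * Sx g P x i j m) =
     pi_form g P x k * pi_form g P x j - pi_form g P x k * (\<Sum>i\<in>UNIV. g x j i * P x i)
     - g x j k * (\<Sum>m\<in>UNIV. P x m * pi_form g P x m)
     + (\<Sum>i\<in>UNIV. g x i k * P x i) * (\<Sum>m\<in>UNIV. g x j m * P x m)"
    unfolding Sx_def sum_product
    by (simp add: algebra_simps sum_subtractf sum.distrib ifds sum_distrib_left)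
  also have "\<dots> = pi_form g P x j * pi_form g P x k - g x j k * (\<Sum>m\<in>UNIV. pi_form g P x m * P x m)"
    by (simp only: pk) (simp add: pi_form_def[symmetric] algebra_simps)
  finally show ?thesis .
qed

end


lemma TTf: "TT g P x l i j k = pi_form g P x j * pi_form g P x k * (if i = l then 1 else 0)
   - pi_form g P x i * pi_form g P x k * (if j = l then 1 else 0)"
  unfolding TT_def torsion_def
  by (simp add: algebra_simps sum_subtractf sum.distrib ifds)

context geoc
begin

lemma Ric1: "x \<in> U \<Longrightarrow> ricci_of (curv1 g P) x j k = ricci_g g x j k
   - (real CARD('n) - 1) * (2 * \<omega> x + (\<Sum>m\<in>UNIV. pi_form g P x m * P x m)) * g x j k"
proof -
  assume x: "x \<in> U"
  have "ricci_of (curv1 g P) x j k - ricci_g g x j k =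
  (\<Sum>i\<in>UNIV. partial i (\<lambda>y. pi_form g P y k) x * (if j = i then 1 else 0)
      - (partial i (\<lambda>y. g y j k) x * P x i + g x j k * partial i (\<lambda>y. P y i) x))
  - (\<Sum>i\<in>UNIV. partial j (\<lambda>y. pi_form g P y k) x
      - (partial j (\<lambda>y. g y i k) x * P x i + g x i k * partial j (\<lambda>y. P y i) x))
  + ((\<Sum>i\<in>UNIV. \<Sum>m\<in>UNIV. christoffel g x m j k * Sx g P x i i m) + (\<Sum>i\<in>UNIV. \<Sum>m\<in>UNIV. Sx g P x m j k * christoffel g x i i m)
      + (\<Sum>i\<in>UNIV. \<Sum>m\<in>UNIV. Sx g P x m j k * Sx g P x i i m))
  - ((\<Sum>i\<in>UNIV. \<Sum>m\<in>UNIV. christoffel g x m i k * Sx g P x i j m) + (\<Sum>i\<in>UNIV. \<Sum>m\<in>UNIV. Sx g P x m i k * christoffel g x i j m)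
      + (\<Sum>i\<in>UNIV. \<Sum>m\<in>UNIV. Sx g P x m i k * Sx g P x i j m))"
    by (simp only: ric_split[OF x] sum.distrib)
  also have "\<dots> = - (real CARD('n) - 1) * (2 * \<omega> x + (\<Sum>m\<in>UNIV. pi_form g P x m * P x m)) * g x j k"
    unfolding E1[OF x] E2[OF x] Q1[OF x] Q2[OF x] Q3[OF x] Q4[OF x] Q5[OF x] Q6[OF x]
    by (simp add: algebra_simps)
  finally show ?thesis by (simp add: algebra_simps)
qed

lemma Ric0: "x \<in> U \<Longrightarrow> ricci0 g P x j k = ricci_g g x j k
   - ((real CARD('n) - 1) / 4) * pi_form g P x j * pi_form g P x k
   - (real CARD('n) - 1) * (3/2 * \<omega> x + 1/2 * (\<Sum>m\<in>UNIV. pi_form g P x m * P x m)) * g x j k"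
proof -
  assume x: "x \<in> U"
  have "ricci0 g P x j k = ricci_of (curv1 g P) x j k
     + (1/2) * (real CARD('n) - 1) * (\<omega> x + (\<Sum>m\<in>UNIV. pi_form g P x m * P x m)) * g x j k
     - ((real CARD('n) - 1) / 4) * pi_form g P x j * pi_form g P x k"
    unfolding ricci0_def ricci_of_def curv0_def CTf[OF x] TTf
    apply (simp add: sum.distrib sum_subtractf ifds algebra_simps gsym[OF x, of k j])
    apply (simp add: field_simps)
    done
  then show ?thesis unfolding Ric1[OF x] by (simp add: field_simps)
qed

end


context geoc
begin

lemma scal0: "x \<in> U \<Longrightarrow> scalar_of g (ricci0 g P) x = scalar_of g (ricci_g g) x
   - ((real CARD('n) - 1) / 4) * (\<Sum>m\<in>UNIV. pi_form g P x m * P x m)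
   - real CARD('n) * ((real CARD('n) - 1) * (3/2 * \<omega> x + 1/2 * (\<Sum>m\<in>UNIV. pi_form g P x m * P x m)))"
proof -
  assume x: "x \<in> U"
  let ?c = "(real CARD('n) - 1) / 4"
  let ?f = "(real CARD('n) - 1) * (3/2 * \<omega> x + 1/2 * (\<Sum>m\<in>UNIV. pi_form g P x m * P x m))"
  have e: "\<And>j k. ginv g x j k * ricci0 g P x j k = ginv g x j k * ricci_g g x j k
     - ?c * (ginv g x j k * (pi_form g P x j * pi_form g P x k)) - ?f * (ginv g x j k * g x j k)"
    by (simp add: Ric0[OF x] algebra_simps)
  have "scalar_of g (ricci0 g P) x = (\<Sum>j\<in>UNIV. \<Sum>k\<in>UNIV. ginv g x j k * ricci_g g x j k)
     - ?c * (\<Sum>j\<in>UNIV. \<Sum>k\<in>UNIV. ginv g x j k * (pi_form g P x j * pi_form g P x k))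
     - ?f * (\<Sum>j\<in>UNIV. \<Sum>k\<in>UNIV. ginv g x j k * g x j k)"
    unfolding scalar_of_def e by (simp only: sum_subtractf sum_distrib_left)
  then show ?thesis unfolding trace_gg[OF x] trace_pp[OF x] scalar_of_def by (simp add: algebra_simps)
qed

lemma main_pt: "x \<in> U \<Longrightarrow>
   (ricci0 g P x j k = scalar_of g (ricci0 g P) x / real CARD('n) * g x j k)
   \<longleftrightarrow> (ricci_g g x j k
            = (1 / (4 * real CARD('n))) *
                (4 * scalar_of g (ricci_g g) x
                 - (real CARD('n) - 1) * (\<Sum>i\<in>UNIV. pi_form g P x i * P x i)) * g x j k
              + ((real CARD('n) - 1) / 4) * pi_form g P x j * pi_form g P x k)"
proof -
  assume x: "x \<in> U"
  have n0: "real CARD('n) \<noteq> 0" by simp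
  have key: "ricci0 g P x j k - scalar_of g (ricci0 g P) x / real CARD('n) * g x j k
     = ricci_g g x j k - ((1 / (4 * real CARD('n))) *
                (4 * scalar_of g (ricci_g g) x
                 - (real CARD('n) - 1) * (\<Sum>i\<in>UNIV. pi_form g P x i * P x i)) * g x j k
              + ((real CARD('n) - 1) / 4) * pi_form g P x j * pi_form g P x k)"
    unfolding scal0[OF x] Ric0[OF x] using n0 by (simp add: field_simps)
  show ?thesis
    by (simp only: eq_iff_diff_eq_0[of "ricci0 g P x j k"] eq_iff_diff_eq_0[of "ricci_g g x j k"] key)
qed

end

theorem mainTheorem6:
  fixes U :: "(real^'n::finite) set"
    and g :: "real^'n \<Rightarrow> 'n \<Rightarrow> 'n \<Rightarrow> real"
    and P :: "real^'n \<Rightarrow> 'n \<Rightarrow> real"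
  assumes "pseudo_riem U g"
    and "\<forall>i. smooth_fun U (\<lambda>x. P x i)"
    and "concircular U g P"
  shows "(\<forall>x\<in>U. \<forall>j k. ricci0 g P x j k
            = scalar_of g (ricci0 g P) x / real CARD('n) * g x j k)
     \<longleftrightarrow>
         (\<forall>x\<in>U. \<forall>j k. ricci_g g x j k
            = (1 / (4 * real CARD('n))) *
                (4 * scalar_of g (ricci_g g) x
                 - (real CARD('n) - 1) * (\<Sum>i\<in>UNIV. pi_form g P x i * P x i)) * g x j k
              + ((real CARD('n) - 1) / 4) * pi_form g P x j * pi_form g P x k)"
proof -
  obtain \<omega> where om: "\<forall>x\<in>U. \<forall>i j. partial i (\<lambda>y. pi_form g P y j) x
        - (\<Sum>k\<in>UNIV. christoffel g x k i j * pi_form g P x k)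
        - pi_form g P x i * pi_form g P x j = \<omega> x * g x i j"
    using assms(3) unfolding concircular_def by blast
  interpret geoc U g P \<omega>
    by unfold_locales (use assms om in auto)
  show ?thesis using main_pt by blast
qed


end
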